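(* Let $\mathcal{E}$ be a finite nonempty set (of domains), let $h\ge 1$, let $\theta^{*}\in\mathbb{R}^{h}$, and let $\epsilon>0$. For each $e\in\mathcal{E}$ let $\mathcal{R}_{e}:\mathbb{R}^{h}\to\mathbb{R}$ be a function (the risk on domain $e$) satisfying the quadratic bowl assumption: for all $\theta\in\mathbb{R}^h$, $$\mathcal{R}_{e}(\theta)=\mathcal{R}_{e}(\theta^{*})+\tfrac12(\theta-\theta^{*})^{\top}H_{e}(\theta-\theta^{*}),$$ where $H_{e}$ is a symmetric positive definite $h\times h$ matrix with eigenvalues $\lambda_{1}^{e}\ge\cdots\ge\lambda_{h}^{e}>0$. For $A\in\mathcal{E}$, let $N_{A,\theta^{*}}^{\epsilon}$ denote the largest path-connected subset of $\mathbb{R}^h$ containing $\theta^*$ on which $|\mathcal{R}_{A}(\theta)-\mathcal{R}_{A}(\theta^{*})|\le\epsilon$ (i.e. the path-connected component of $\theta^*$ in $\{\theta : |\mathcal{R}_{A}(\theta)-\mathcal{R}_{A}(\theta^{*})|\le\epsilon\}$). For $(A,B)\in\mathcal{E}^2$ define $$\mathcal{I}^{\epsilon}(A,B)=\max_{\theta\in N_{A,\theta^{*}}^{\epsilon}}\left|\mathcal{R}_{B}(\theta)-\mathcal{R}_{A}(\theta^{*})\right|,\qquad R(A,B)=\mathcal{R}_{B}(\theta^{*})-\mathcal{R}_{A}(\theta^{*}),$$ $$H^{\epsilon}(A,B)=\max_{\theta:\ \frac12(\theta-\theta^{*})^{\top}H_{A}(\theta-\theta^{*})\le\epsilon}\ \tfrac12(\theta-\theta^{*})^{\top}H_{B}(\theta-\theta^{*}).$$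 Suppose that for all $(A,B)\in\mathcal{E}^2$ with $R(A,B)<0$ we have $$\epsilon\le -R(A,B)\times\frac{\lambda_{h}^{A}}{\lambda_{1}^{B}}.$$ Then $$\max_{(A,B)\in\mathcal{E}^2}\mathcal{I}^{\epsilon}(A,B)=\max_{(A,B)\in\mathcal{E}^2}\bigl(R(A,B)+H^{\epsilon}(A,B)\bigr).$$
   Context: $\mathcal{I}^{\epsilon}(A,B)$ is called the inconsistency between domains $A$ and $B$ around $\theta^*$; $\lambda_1^{B}$ denotes the largest eigenvalue of $H_B$ and $\lambda_h^{A}$ the smallest eigenvalue of $H_A$. *)

theory Defs
  imports "HOL-Analysis.Analysis"
begin

definition sym_matrix :: "real^'n^'n \<Rightarrow> bool" where
  "sym_matrix H \<longleftrightarrow> transpose H = H"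

definition pos_def_matrix :: "real^'n^'n \<Rightarrow> bool" where
  "pos_def_matrix H \<longleftrightarrow> (\<forall>v. v \<noteq> 0 \<longrightarrow> v \<bullet> (H *v v) > 0)"

definition eigenvalues :: "real^'n^'n \<Rightarrow> real set" where
  "eigenvalues H = {l. \<exists>v. v \<noteq> 0 \<and> H *v v = l *\<^sub>R v}"

definition lambda_max :: "real^'n^'n \<Rightarrow> real" where
  "lambda_max H = Max (eigenvalues H)"

definition lambda_min :: "real^'n^'n \<Rightarrow> real" where
  "lambda_min H = Min (eigenvalues H)"

definition qform :: "real^'n^'n \<Rightarrow> real^'n \<Rightarrow> real" where
  "qform H d = (1/2) * (d \<bullet> (H *v d))"

definition nbhd :: "(real^'n \<Rightarrow> real) \<Rightarrow> real^'n \<Rightarrow> real \<Rightarrow> (real^'n) set" where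
  "nbhd RA th eps = path_component_set {t. \<bar>RA t - RA th\<bar> \<le> eps} th"

definition inconsistency ::
  "('e \<Rightarrow> real^'n \<Rightarrow> real) \<Rightarrow> real^'n \<Rightarrow> real \<Rightarrow> 'e \<Rightarrow> 'e \<Rightarrow> real" where
  "inconsistency R th eps A B =
     (SUP t \<in> nbhd (R A) th eps. \<bar>R B t - R A th\<bar>)"

definition Rdiff :: "('e \<Rightarrow> real^'n \<Rightarrow> real) \<Rightarrow> real^'n \<Rightarrow> 'e \<Rightarrow> 'e \<Rightarrow> real" where
  "Rdiff R th A B = R B th - R A th"

definition Heps ::
  "('e \<Rightarrow> real^'n^'n) \<Rightarrow> real^'n \<Rightarrow> real \<Rightarrow> 'e \<Rightarrow> 'e \<Rightarrow> real" where
  "Heps H th eps A B =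
     (SUP t \<in> {t. qform (H A) (t - th) \<le> eps}. qform (H B) (t - th))"

end

theory Submission
  imports Defs
begin


lemma qf_scale: "(c *\<^sub>R d) \<bullet> ((H::real^'n^'n) *v (c *\<^sub>R d)) = c^2 * (d \<bullet> (H *v d))"
  by (simp add: matrix_vector_mult_scaleR power2_eq_square)

lemma qf_nonneg: "pos_def_matrix H \<Longrightarrow> 0 \<le> d \<bullet> ((H::real^'n^'n) *v d)"
  unfolding pos_def_matrix_def
  by (cases "d = 0") (auto intro: less_imp_le)

lemma qf_upper: "\<exists>C. \<forall>d. d \<bullet> ((H::real^'n^'n) *v d) \<le> C * (norm d)^2"
proof -
  obtain B where B: "\<And>x. norm (H *v x) \<le> B * norm x"
    using linear_bounded_pos[OF matrix_vector_mul_linear[of H]] by metis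
  have "d \<bullet> (H *v d) \<le> B * (norm d)^2" for d
  proof -
    have "d \<bullet> (H *v d) \<le> norm d * norm (H *v d)" by (metis Cauchy_Schwarz_ineq2 abs_le_D1)
    also have "\<dots> \<le> norm d * (B * norm d)" by (simp add: B mult_left_mono)
    finally show ?thesis by (simp add: power2_eq_square algebra_simps)
  qed
  then show ?thesis by blast
qed

lemma qf_lower:
  assumes "pos_def_matrix (H::real^'n^'n)"
  shows "\<exists>c>0. \<forall>d. c * (norm d)^2 \<le> d \<bullet> (H *v d)"
proof -
  have cont: "continuous_on (sphere 0 1) (\<lambda>d::real^'n. d \<bullet> (H *v d))"
    by (intro continuous_intros bounded_linear.continuous_on[OF matrix_vector_mul_bounded_linear])
  obtain u :: "real^'n" where "norm u = 1"
    using vector_choose_size[of 1] by auto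
  then have ne: "sphere (0::real^'n) 1 \<noteq> {}" by auto
  obtain x where x: "x \<in> sphere 0 1" "\<And>y. y \<in> sphere 0 1 \<Longrightarrow> x \<bullet> (H *v x) \<le> y \<bullet> (H *v y)"
    using continuous_attains_inf[OF compact_sphere ne cont] by blast
  have xpos: "x \<bullet> (H *v x) > 0"
  proof -
    have "x \<noteq> 0" using x(1) by auto
    then show ?thesis using assms unfolding pos_def_matrix_def by auto
  qed
  have "x \<bullet> (H *v x) * (norm d)^2 \<le> d \<bullet> (H *v d)" for d
  proof (cases "d = 0")
    case True then show ?thesis by simp
  next
    case False
    let ?u = "(1/norm d) *\<^sub>R d"
    have "?u \<in> sphere 0 1" using False by simp
    then have "x \<bullet> (H *v x) \<le> ?u \<bullet> (H *v ?u)" by (rule x(2))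
    also have "\<dots> = (1/norm d)^2 * (d \<bullet> (H *v d))" by (rule qf_scale)
    finally have "x \<bullet> (H *v x) \<le> (1/norm d)^2 * (d \<bullet> (H *v d))" .
    then show ?thesis using False
      by (simp add: field_simps power2_eq_square)
  qed
  then show ?thesis using xpos by blast
qed

lemma nbhd_eq:
  assumes R: "\<And>t. RA t = RA th + qform HA (t - th)" and pd: "pos_def_matrix HA"
  shows "nbhd RA th eps = {t. qform HA (t - th) \<le> eps}"
proof -
  let ?S = "{t. qform HA (t - th) \<le> eps}"
  have qnn: "0 \<le> qform HA d" for d using qf_nonneg[OF pd] by (simp add: qform_def)
  have S: "{t. \<bar>RA t - RA th\<bar> \<le> eps} = ?S"
  proof -
    have "\<bar>RA t - RA th\<bar> = qform HA (t - th)" for t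
      using R[of t] qnn[of "t - th"] by linarith
    then show ?thesis by simp
  qed
  have "?S \<subseteq> path_component_set ?S th"
  proof
    fix t assume t: "t \<in> ?S"
    have "closed_segment th t \<subseteq> ?S"
    proof
      fix y assume "y \<in> closed_segment th t"
      then obtain u where u: "0 \<le> u" "u \<le> 1" "y = (1 - u) *\<^sub>R th + u *\<^sub>R t"
        unfolding closed_segment_def by auto
      have "y - th = u *\<^sub>R (t - th)" using u(3) by (simp add: algebra_simps)
      then have "qform HA (y - th) = u^2 * qform HA (t - th)"
        unfolding qform_def using qf_scale[of u "t - th" HA] by simp
      also have "\<dots> \<le> 1 * qform HA (t - th)"
        using u qnn by (intro mult_right_mono) (auto simp: power_le_one)
      finally show "y \<in> ?S" using t by simp
    qed
    then show "t \<in> path_component_set ?S th"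
      by (simp add: path_component_linepath)
  qed
  then show ?thesis unfolding nbhd_def S using path_component_subset by blast
qed

lemma qbound:
  assumes pd: "pos_def_matrix (HA::real^'n^'n)"
  shows "\<exists>K. \<forall>d. qform HA d \<le> eps \<longrightarrow> qform HB d \<le> K"
proof -
  obtain c where c: "c > 0" "\<And>d. c * (norm d)^2 \<le> d \<bullet> (HA *v d)" using qf_lower[OF pd] by blast
  obtain C where C: "\<And>d. d \<bullet> (HB *v d) \<le> C * (norm d)^2" using qf_upper by blast
  have "qform HB d \<le> \<bar>C\<bar> * eps / c" if "qform HA d \<le> eps" for d
  proof -
    have "c * (norm d)^2 \<le> 2 * eps" using c(2)[of d] that by (simp add: qform_def)
    then have n: "(norm d)^2 \<le> 2 * eps / c" using c(1) by (simp add: field_simps)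
    have "d \<bullet> (HB *v d) \<le> \<bar>C\<bar> * (norm d)^2"
      using C[of d] by (meson abs_ge_self dual_order.trans mult_right_mono zero_le_power2)
    also have "\<dots> \<le> \<bar>C\<bar> * (2 * eps / c)" using n by (intro mult_left_mono) auto
    finally show ?thesis by (simp add: qform_def mult_ac)
  qed
  then show ?thesis by blast
qed

lemma pair:
  assumes pdA: "pos_def_matrix (H A)" and pdB: "pos_def_matrix (H B)"
    and RA: "\<And>t. R A t = R A th + qform (H A) (t - th)"
    and RB: "\<And>t. R B t = R B th + qform (H B) (t - th)"
    and eps: "eps > 0"
  shows "0 \<le> Heps H th eps A B"
    and "Rdiff R th A B + Heps H th eps A B \<le> inconsistency R th eps A B"
    and "inconsistency R th eps A B \<le> max (- Rdiff R th A B) (Rdiff R th A B + Heps H th eps A B)"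
proof -
  let ?S = "{t. qform (H A) (t - th) \<le> eps}"
  let ?r = "Rdiff R th A B"
  let ?M = "Heps H th eps A B"
  have N: "nbhd (R A) th eps = ?S" by (rule nbhd_eq[OF RA pdA])
  have thS: "th \<in> ?S" using eps by (simp add: qform_def)
  have qnn: "0 \<le> qform (H B) d" for d using qf_nonneg[OF pdB] by (simp add: qform_def)
  obtain K where K: "\<And>d. qform (H A) d \<le> eps \<Longrightarrow> qform (H B) d \<le> K"
    using qbound[OF pdA] by blast
  have bddq: "bdd_above ((\<lambda>t. qform (H B) (t - th)) ` ?S)"
    using K by (auto intro!: bdd_aboveI2)
  have val: "\<bar>R B t - R A th\<bar> = \<bar>?r + qform (H B) (t - th)\<bar>" for t
    using RB[of t] by (simp add: Rdiff_def)
  have bddI: "bdd_above ((\<lambda>t. \<bar>R B t - R A th\<bar>) ` ?S)"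
  proof (rule bdd_aboveI2)
    fix t assume "t \<in> ?S"
    then show "\<bar>R B t - R A th\<bar> \<le> \<bar>?r\<bar> + K" unfolding val using K[of "t - th"] qnn[of "t - th"] by auto
  qed
  have I: "inconsistency R th eps A B = (SUP t\<in>?S. \<bar>R B t - R A th\<bar>)"
    unfolding inconsistency_def N ..
  have M: "?M = (SUP t\<in>?S. qform (H B) (t - th))" unfolding Heps_def ..
  have Mge: "qform (H B) (t - th) \<le> ?M" if "t \<in> ?S" for t
    unfolding M using that bddq by (rule cSUP_upper)
  show "0 \<le> ?M" using Mge[OF thS] qnn[of "th - th"] by linarith
  have "?M \<le> inconsistency R th eps A B - ?r"
    unfolding M
  proof (rule cSUP_least)
    show "?S \<noteq> {}" using thS by blast
    fix t assume t: "t \<in> ?S"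
    have "\<bar>R B t - R A th\<bar> \<le> inconsistency R th eps A B"
      unfolding I using t bddI by (rule cSUP_upper)
    then show "qform (H B) (t - th) \<le> inconsistency R th eps A B - ?r"
      unfolding val by linarith
  qed
  then show "?r + ?M \<le> inconsistency R th eps A B" by linarith
  show "inconsistency R th eps A B \<le> max (- ?r) (?r + ?M)"
    unfolding I
  proof (rule cSUP_least)
    show "?S \<noteq> {}" using thS by blast
    fix t assume t: "t \<in> ?S"
    show "\<bar>R B t - R A th\<bar> \<le> max (- ?r) (?r + ?M)"
      unfolding val using Mge[OF t] qnn[of "t - th"] by linarith
  qed
qed


theorem mainTheorem1:
  fixes E :: "'e set"
    and R :: "'e \<Rightarrow> real^'n \<Rightarrow> real"
    and H :: "'e \<Rightarrow> real^'n^'n"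
    and th :: "real^'n"
    and eps :: real
  assumes "finite E" and "E \<noteq> {}"
    and "eps > 0"
    and "\<And>e. e \<in> E \<Longrightarrow> sym_matrix (H e)"
    and "\<And>e. e \<in> E \<Longrightarrow> pos_def_matrix (H e)"
    and "\<And>e t. e \<in> E \<Longrightarrow> R e t = R e th + qform (H e) (t - th)"
    and "\<And>A B. A \<in> E \<Longrightarrow> B \<in> E \<Longrightarrow> Rdiff R th A B < 0 \<Longrightarrow>
           eps \<le> - Rdiff R th A B * (lambda_min (H A) / lambda_max (H B))"
  shows "Max ((\<lambda>(A, B). inconsistency R th eps A B) ` (E \<times> E))
       = Max ((\<lambda>(A, B). Rdiff R th A B + Heps H th eps A B) ` (E \<times> E))"
proof -
  let ?L = "(\<lambda>(A, B). inconsistency R th eps A B) ` (E \<times> E)"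
  let ?Q = "(\<lambda>(A, B). Rdiff R th A B + Heps H th eps A B) ` (E \<times> E)"
  have fin: "finite ?L" "finite ?Q" using assms(1) by auto
  have ne: "?L \<noteq> {}" "?Q \<noteq> {}" using assms(2) by auto
  have P: "0 \<le> Heps H th eps A B"
      "Rdiff R th A B + Heps H th eps A B \<le> inconsistency R th eps A B"
      "inconsistency R th eps A B \<le> max (- Rdiff R th A B) (Rdiff R th A B + Heps H th eps A B)"
    if AB: "A \<in> E" "B \<in> E" for A B
    using pair[of H A B R th eps, OF assms(5)[OF AB(1)] assms(5)[OF AB(2)]
        assms(6)[OF AB(1)] assms(6)[OF AB(2)] assms(3)] by auto
  have Qge: "Rdiff R th A B + Heps H th eps A B \<le> Max ?Q" if "A \<in> E" "B \<in> E" for A B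
    using that fin(2) by (intro Max_ge) force+
  have Lge: "inconsistency R th eps A B \<le> Max ?L" if "A \<in> E" "B \<in> E" for A B
    using that fin(1) by (intro Max_ge) force+
  have "x \<le> Max ?Q" if xL: "x \<in> ?L" for x
  proof -
    obtain A B where AB: "A \<in> E" "B \<in> E" and x: "x = inconsistency R th eps A B"
      using xL by auto
    have "- Rdiff R th A B = Rdiff R th B A" by (simp add: Rdiff_def)
    also have "\<dots> \<le> Rdiff R th B A + Heps H th eps B A" using P(1)[OF AB(2) AB(1)] by simp
    also have "\<dots> \<le> Max ?Q" using Qge[OF AB(2) AB(1)] .
    finally have 1: "- Rdiff R th A B \<le> Max ?Q" .
    show ?thesis unfolding x using P(3)[OF AB] 1 Qge[OF AB] by linarith
  qed
  then have "Max ?L \<le> Max ?Q" by (simp add: Max_le_iff[OF fin(1) ne(1)])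
  moreover have "x \<le> Max ?L" if xQ: "x \<in> ?Q" for x
  proof -
    obtain A B where AB: "A \<in> E" "B \<in> E" and x: "x = Rdiff R th A B + Heps H th eps A B"
      using xQ by auto
    show ?thesis unfolding x using P(2)[OF AB] Lge[OF AB] by linarith
  qed
  then have "Max ?Q \<le> Max ?L" by (simp add: Max_le_iff[OF fin(2) ne(2)])
  ultimately show ?thesis by linarith
qed

end
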